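(* Let $\gamma: I \to \mathbb{R}^3$ be a unit speed curve with arc-length parameter $s$, Frenet frame $\{T,N,B\}$, curvature $\kappa$ and torsion $\tau$. Let $u,v,w: I \to \mathbb{R}$ be differentiable functions with $u^2+v^2+w^2=1$, put $V = uT + vN + wB$, let $\lambda: I \to \mathbb{R}$ be a differentiable function, and let $\beta(s) = \int_0^s V(t)\,dt + \lambda(s)N(s)$, assumed to be a regular curve with Frenet frame $\{\overline{T},\overline{N},\overline{B}\}$. Then $\gamma$ is a $V$-Mannheim curve (i.e. $\overline{B}(s) = \epsilon N(s)$ with $\epsilon = \pm 1$ for all $s$) if and only if $$u\kappa - w\tau = \lambda(\kappa^2+\tau^2) \quad\text{and}\quad \lambda(s) = -\int v(s)\,ds \ \ (\text{i.e. } \lambda' = -v) \text{ on } I.$$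
   Context: Frenet equations: $T' = \kappa N$, $N' = -\kappa T + \tau B$, $B' = -\tau N$. Definition (from the paper): with $\gamma$, $V$, $\lambda$, $\beta$ as in the claim, $\gamma$ is called a $V$-Mannheim curve and $\beta$ its $V$-Mannheim partner curve if the principal normal $N$ of $\gamma$ and the binormal $\overline{B}$ of $\beta$ are linearly dependent at corresponding points, i.e. $\overline{B} = \epsilon N$, $\epsilon = \pm 1$. It is assumed that $\beta$ is regular with nonvanishing curvature so that its Frenet frame is defined. *)

theory Defs
  imports "HOL-Analysis.Analysis"
begin

text \<open>Oriented integral from a to b (so that the integral from 0 to s makes sense for s < 0).\<close>
definition oint :: "real \<Rightarrow> real \<Rightarrow> (real \<Rightarrow> real^3) \<Rightarrow> real^3" where
  "oint a b f = (if a \<le> b then integral {a..b} f else - integral {b..a} f)"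

definition frenet_binormal :: "(real \<Rightarrow> real^3) \<Rightarrow> real \<Rightarrow> real^3" where
  "frenet_binormal c t =
     (let d1 = vector_derivative c (at t);
          d2 = vector_derivative (\<lambda>s. vector_derivative c (at s)) (at t)
      in (1 / norm (cross3 d1 d2)) *\<^sub>R cross3 d1 d2)"

end

theory Submission
  imports Defs "HOL-Analysis.Analysis"
begin

lemma oint_deriv:
  fixes V :: "real \<Rightarrow> real^3"
  assumes I: "open I" "is_interval I" "0 \<in> I" and c: "continuous_on I V" and s: "s \<in> I"
  shows "((\<lambda>t. oint 0 t V) has_vector_derivative V s) (at s)"
proof -
  obtain e where e: "e > 0" "ball s e \<subseteq> I" using I(1) s open_contains_ball by blast
  define a where "a = min 0 (s - e/2)"
  define b where "b = max 0 (s + e/2)"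
  have s1: "s - e/2 \<in> I" "s + e/2 \<in> I" using e by (auto intro!: subsetD[OF e(2)] simp: dist_real_def)
  have aI: "a \<in> I" using s1 I(3) unfolding a_def min_def by simp
  have bI: "b \<in> I" using s1 I(3) unfolding b_def max_def by simp
  have sub: "{a..b} \<subseteq> I"
  proof
    fix x assume x: "x \<in> {a..b}"
    then have "a \<le> x" "x \<le> b" by simp_all
    then show "x \<in> I" using I(2) aI bI unfolding is_interval_1 by blast
  qed
  have cab: "continuous_on {a..b} V" using c sub continuous_on_subset by blast
  have int: "V integrable_on {a..b}" using cab integrable_continuous_interval by blast
  have a0: "a \<le> 0" "0 \<le> b" "a < s" "s < b" using e unfolding a_def b_def by linarith+
  have eq: "oint 0 t V = integral {a..t} V - integral {a..0} V" if t: "t \<in> {a<..<b}" for t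
  proof (cases "0 \<le> t")
    case True
    have "V integrable_on {a..t}" by (rule integrable_on_subinterval[OF int]) (use t in auto)
    then have "integral {a..0} V + integral {0..t} V = integral {a..t} V"
      using Henstock_Kurzweil_Integration.integral_combine[where a=a and c=0 and b=t and f=V] a0 True by simp
    then show ?thesis using True by (simp add: oint_def algebra_simps)
  next
    case False
    have "V integrable_on {a..0}" by (rule integrable_on_subinterval[OF int]) (use a0 in auto)
    then have "integral {a..t} V + integral {t..0} V = integral {a..0} V"
      using Henstock_Kurzweil_Integration.integral_combine[where a=a and c=t and b=0 and f=V] False t by simp
    then show ?thesis using False by (simp add: oint_def algebra_simps)
  qed
  have sab: "s \<in> {a..b}" using a0 by simp
  have sint: "s \<in> interior {a..b}" using a0 by simp
  have "((\<lambda>u. integral {a..u} V) has_vector_derivative V s) (at s within {a..b})"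
    by (rule integral_has_vector_derivative[OF cab sab])
  then have "((\<lambda>u. integral {a..u} V) has_vector_derivative V s) (at s)"
    by (simp only: at_within_interior[OF sint])
  then have "((\<lambda>u. integral {a..u} V - integral {a..0} V) has_vector_derivative V s - 0) (at s)"
    by (rule has_vector_derivative_diff[OF _ has_vector_derivative_const])
  then have d: "((\<lambda>u. integral {a..u} V - integral {a..0} V) has_vector_derivative V s) (at s)"
    by simp
  have sin: "s \<in> {a<..<b}" using a0 by simp
  show ?thesis
    by (rule has_vector_derivative_transform_within_open[OF d open_greaterThanLessThan sin])
       (simp add: eq)
qed

lemma zero_deriv:
  fixes g :: "real \<Rightarrow> real"
  assumes "(g has_vector_derivative g') (at s)" "open I" "s \<in> I" "\<And>t. t \<in> I \<Longrightarrow> g t = 0"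
  shows "g' = 0"
proof -
  have "((\<lambda>t. 0::real) has_vector_derivative 0) (at s)" by simp
  then have "(g has_vector_derivative 0) (at s)"
    by (rule has_vector_derivative_transform_within_open[where S=I]) (use assms in auto)
  then show ?thesis using assms(1) vector_derivative_unique_at by blast
qed

lemma frame:
  fixes T N B :: "real^3"
  assumes "norm T = 1" "norm N = 1" "T \<bullet> N = 0" "B = cross3 T N"
  shows "T \<bullet> T = 1" "N \<bullet> N = 1" "B \<bullet> B = 1" "T \<bullet> B = 0" "N \<bullet> B = 0"
        "B \<bullet> T = 0" "B \<bullet> N = 0" "N \<bullet> T = 0"
proof -
  show tt: "T \<bullet> T = 1" "N \<bullet> N = 1" using assms by (simp_all add: power2_norm_eq_inner[symmetric])
  have "(norm B)\<^sup>2 = 1" using norm_cross_dot[of T N] assms by simp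
  then show "B \<bullet> B = 1" by (simp add: power2_norm_eq_inner)
  show "T \<bullet> B = 0" "N \<bullet> B = 0" "B \<bullet> T = 0" "B \<bullet> N = 0"
    using assms(4) dot_cross_self inner_commute by metis+
  show "N \<bullet> T = 0" using assms(3) by (simp add: inner_commute)
qed

lemma trip: "cross3 (cross3 a b) c = (a \<bullet> c) *\<^sub>R b - (b \<bullet> c) *\<^sub>R (a::real^3)"
  by (simp add: cross3_simps forall_3)
lemma trip2: "cross3 c (cross3 a c) = (c \<bullet> c) *\<^sub>R a - (c \<bullet> a) *\<^sub>R (c::real^3)"
  by (simp add: cross3_simps forall_3)

theorem mainTheorem1:
  fixes I :: "real set"
    and \<gamma> T N B :: "real \<Rightarrow> real^3"
    and \<kappa> \<tau> u v w lam :: "real \<Rightarrow> real"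
    and V \<beta> :: "real \<Rightarrow> real^3"
  assumes I: "open I" "is_interval I" "0 \<in> I"
    and frenet_T: "\<And>s. s \<in> I \<Longrightarrow> (\<gamma> has_vector_derivative T s) (at s)"
    and unit_T: "\<And>s. s \<in> I \<Longrightarrow> norm (T s) = 1"
    and unit_N: "\<And>s. s \<in> I \<Longrightarrow> norm (N s) = 1"
    and orth_TN: "\<And>s. s \<in> I \<Longrightarrow> T s \<bullet> N s = 0"
    and B_def: "\<And>s. s \<in> I \<Longrightarrow> B s = cross3 (T s) (N s)"
    and kappa_pos: "\<And>s. s \<in> I \<Longrightarrow> \<kappa> s > 0"
    and frenet1: "\<And>s. s \<in> I \<Longrightarrow> (T has_vector_derivative (\<kappa> s *\<^sub>R N s)) (at s)"
    and frenet2: "\<And>s. s \<in> I \<Longrightarrow>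
                    (N has_vector_derivative (- \<kappa> s *\<^sub>R T s + \<tau> s *\<^sub>R B s)) (at s)"
    and frenet3: "\<And>s. s \<in> I \<Longrightarrow> (B has_vector_derivative (- \<tau> s *\<^sub>R N s)) (at s)"
    and diff_u: "\<And>s. s \<in> I \<Longrightarrow> u differentiable (at s)"
    and diff_v: "\<And>s. s \<in> I \<Longrightarrow> v differentiable (at s)"
    and diff_w: "\<And>s. s \<in> I \<Longrightarrow> w differentiable (at s)"
    and unit_uvw: "\<And>s. s \<in> I \<Longrightarrow> (u s)\<^sup>2 + (v s)\<^sup>2 + (w s)\<^sup>2 = 1"
    and V_def: "\<And>s. V s = u s *\<^sub>R T s + v s *\<^sub>R N s + w s *\<^sub>R B s"
    and diff_lambda: "\<And>s. s \<in> I \<Longrightarrow> lam differentiable (at s)"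
    and beta_def: "\<And>s. \<beta> s = oint 0 s V + lam s *\<^sub>R N s"
    and beta_d1: "\<And>s. s \<in> I \<Longrightarrow> \<beta> differentiable (at s)"
    and beta_d2: "\<And>s. s \<in> I \<Longrightarrow>
                    (\<lambda>t. vector_derivative \<beta> (at t)) differentiable (at s)"
    and beta_curv: "\<And>s. s \<in> I \<Longrightarrow>
                    cross3 (vector_derivative \<beta> (at s))
                           (vector_derivative (\<lambda>t. vector_derivative \<beta> (at t)) (at s)) \<noteq> 0"
  shows "(\<forall>s\<in>I. frenet_binormal \<beta> s = N s \<or> frenet_binormal \<beta> s = - N s)
         \<longleftrightarrow> ((\<forall>s\<in>I. u s * \<kappa> s - w s * \<tau> s = lam s * ((\<kappa> s)\<^sup>2 + (\<tau> s)\<^sup>2))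
              \<and> (\<forall>s\<in>I. (lam has_real_derivative (- v s)) (at s)))"
  proof -
  define D where "D s = (u s - lam s * \<kappa> s) *\<^sub>R T s + (v s + deriv lam s) *\<^sub>R N s
      + (w s + lam s * \<tau> s) *\<^sub>R B s" for s
  define vd where "vd t = vector_derivative \<beta> (at t)" for t
  define b2 where "b2 s = vector_derivative vd (at s)" for s
  note fr = frame[OF unit_T unit_N orth_TN B_def]
  have hlam: "(lam has_real_derivative deriv lam s) (at s)" if "s \<in> I" for s
    using diff_lambda[OF that] DERIV_deriv_iff_real_differentiable by blast
  have Veq: "V = (\<lambda>s. u s *\<^sub>R T s + v s *\<^sub>R N s + w s *\<^sub>R B s)" by (rule ext) (simp add: V_def)
  have contV: "continuous_on I V"
  proof (rule continuous_at_imp_continuous_on, intro ballI)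
    fix x assume x: "x \<in> I"
    have "isCont u x" "isCont v x" "isCont w x"
      using diff_u[OF x] diff_v[OF x] diff_w[OF x] differentiable_imp_continuous_within by blast+
    moreover have "isCont T x" "isCont N x" "isCont B x"
      using frenet1[OF x] frenet2[OF x] frenet3[OF x] has_vector_derivative_continuous by blast+
    ultimately show "isCont V x" unfolding Veq by (intro continuous_intros)
  qed
  have hb: "(\<beta> has_vector_derivative D s) (at s)" if s: "s \<in> I" for s
  proof -
    have beq: "\<beta> = (\<lambda>t. oint 0 t V + lam t *\<^sub>R N t)" by (rule ext) (simp add: beta_def)
    have "((\<lambda>t. oint 0 t V + lam t *\<^sub>R N t) has_vector_derivative
        V s + (lam s *\<^sub>R (- \<kappa> s *\<^sub>R T s + \<tau> s *\<^sub>R B s) + deriv lam s *\<^sub>R N s)) (at s)"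
      by (intro has_vector_derivative_add has_vector_derivative_scaleR oint_deriv[OF I contV s]
          hlam[OF s] frenet2[OF s])
    moreover have "V s + (lam s *\<^sub>R (- \<kappa> s *\<^sub>R T s + \<tau> s *\<^sub>R B s) + deriv lam s *\<^sub>R N s) = D s"
      by (simp add: V_def D_def algebra_simps)
    ultimately show ?thesis using beq by simp
  qed
  have vdD: "vd s = D s" if "s \<in> I" for s
    unfolding vd_def using hb[OF that] vector_derivative_at by blast
  have DN: "D s \<bullet> N s = v s + deriv lam s" if s: "s \<in> I" for s
    using frame[OF unit_T[OF s] unit_N[OF s] orth_TN[OF s] B_def[OF s]] orth_TN[OF s] by (simp add: D_def inner_add_left)
  have key: "b2 s \<bullet> N s = (u s - lam s * \<kappa> s) * \<kappa> s - (w s + lam s * \<tau> s) * \<tau> s"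
    if z: "\<forall>t\<in>I. D t \<bullet> N t = 0" and s: "s \<in> I" for s
  proof -
    have h2: "(vd has_vector_derivative b2 s) (at s)"
      unfolding b2_def using beta_d2[OF s] unfolding vd_def[symmetric] vector_derivative_works by blast
    have "((\<lambda>t. vd t \<bullet> N t) has_vector_derivative
          (vd s \<bullet> (- \<kappa> s *\<^sub>R T s + \<tau> s *\<^sub>R B s) + b2 s \<bullet> N s)) (at s)"
      by (rule bounded_bilinear.has_vector_derivative[OF bounded_bilinear_inner h2 frenet2[OF s]])
    then have "vd s \<bullet> (- \<kappa> s *\<^sub>R T s + \<tau> s *\<^sub>R B s) + b2 s \<bullet> N s = 0"
      by (rule zero_deriv[OF _ I(1) s]) (use z vdD in auto)
    moreover have "vd s \<bullet> (- \<kappa> s *\<^sub>R T s + \<tau> s *\<^sub>R B s)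
        = - (u s - lam s * \<kappa> s) * \<kappa> s + (w s + lam s * \<tau> s) * \<tau> s"
      using frame[OF unit_T[OF s] unit_N[OF s] orth_TN[OF s] B_def[OF s]] orth_TN[OF s] unfolding vdD[OF s] D_def
      by (simp add: inner_add_left inner_add_right) (simp add: algebra_simps)
    ultimately show ?thesis by (simp add: algebra_simps)
  qed
  have fb: "frenet_binormal \<beta> s = (1 / norm (cross3 (vd s) (b2 s))) *\<^sub>R cross3 (vd s) (b2 s)" for s
    unfolding frenet_binormal_def b2_def vd_def Let_def by simp
  show ?thesis
  proof
    assume H: "\<forall>s\<in>I. frenet_binormal \<beta> s = N s \<or> frenet_binormal \<beta> s = - N s"
    have o: "vd s \<bullet> N s = 0 \<and> b2 s \<bullet> N s = 0" if s: "s \<in> I" for s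
    proof -
      define X where "X = cross3 (vd s) (b2 s)"
      have "vd s \<bullet> X = 0" "b2 s \<bullet> X = 0" unfolding X_def by (simp_all add: dot_cross_self)
      then have "vd s \<bullet> frenet_binormal \<beta> s = 0" "b2 s \<bullet> frenet_binormal \<beta> s = 0"
        by (simp_all add: fb X_def[symmetric])
      then show ?thesis using H s by auto
    qed
    have dl: "deriv lam s = - v s" if s: "s \<in> I" for s
      using o[OF s] vdD[OF s] DN[OF s] by simp
    have z: "\<forall>t\<in>I. D t \<bullet> N t = 0" using o vdD by simp
    show "(\<forall>s\<in>I. u s * \<kappa> s - w s * \<tau> s = lam s * ((\<kappa> s)\<^sup>2 + (\<tau> s)\<^sup>2))
              \<and> (\<forall>s\<in>I. (lam has_real_derivative (- v s)) (at s))"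
    proof (intro conjI ballI)
      fix s assume s: "s \<in> I"
      show "(lam has_real_derivative (- v s)) (at s)" using hlam[OF s] dl[OF s] by simp
      have "(u s - lam s * \<kappa> s) * \<kappa> s - (w s + lam s * \<tau> s) * \<tau> s = 0"
        using key[OF z s] o[OF s] by simp
      then show "u s * \<kappa> s - w s * \<tau> s = lam s * ((\<kappa> s)\<^sup>2 + (\<tau> s)\<^sup>2)"
        by (simp add: algebra_simps power2_eq_square)
    qed
  next
    assume H: "(\<forall>s\<in>I. u s * \<kappa> s - w s * \<tau> s = lam s * ((\<kappa> s)\<^sup>2 + (\<tau> s)\<^sup>2))
              \<and> (\<forall>s\<in>I. (lam has_real_derivative (- v s)) (at s))"
    have dl: "deriv lam s = - v s" if s: "s \<in> I" for s
      using H s DERIV_imp_deriv by blast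
    have z: "\<forall>t\<in>I. D t \<bullet> N t = 0" using dl DN by simp
    show "\<forall>s\<in>I. frenet_binormal \<beta> s = N s \<or> frenet_binormal \<beta> s = - N s"
    proof
      fix s assume s: "s \<in> I"
      have o1: "vd s \<bullet> N s = 0" using z vdD s by simp
      have o2: "b2 s \<bullet> N s = 0" using key[OF z s] H s
        by (simp add: algebra_simps power2_eq_square)
      define X where "X = cross3 (vd s) (b2 s)"
      have Xnz: "X \<noteq> 0" using beta_curv[OF s] unfolding X_def b2_def vd_def by simp
      have c0: "cross3 X (N s) = 0" unfolding X_def trip o1 o2 by simp
      have NN: "N s \<bullet> N s = 1" using unit_N[OF s] by (simp add: power2_norm_eq_inner[symmetric])
      define k where "k = N s \<bullet> X"
      have "cross3 (N s) (cross3 X (N s)) = X - k *\<^sub>R N s" unfolding trip2 NN k_def by simp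
      then have Xk: "X = k *\<^sub>R N s" using c0 by simp
      have knz: "k \<noteq> 0" using Xnz Xk by auto
      have nX: "norm X = \<bar>k\<bar>" using Xk unit_N[OF s] by simp
      have "frenet_binormal \<beta> s = (k / \<bar>k\<bar>) *\<^sub>R N s"
        unfolding fb X_def[symmetric] nX by (simp add: Xk)
      then show "frenet_binormal \<beta> s = N s \<or> frenet_binormal \<beta> s = - N s"
        using knz by (cases "k > 0") auto
    qed
  qed
qed

end
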